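(* Let $K$ be the field of fractions of a complete discrete valuation ring $\mathcal{O}$ with maximal ideal $\mathfrak{p}$ such that the residue field $\mathcal{O}/\mathfrak{p}$ is finite. In the coefficient-choosing game of degree $d = 3$ over $K$, whichever player makes the last move has a winning strategy.
   Context: The coefficient-choosing game of degree $d$ over $K$: Nora and Wanda alternately choose coefficients of $f(x) = a_d x^d + \cdots + a_0$; on each move the current player picks a not-yet-chosen coefficient and assigns it a value in $K$, subject to $a_d \neq 0$, $a_0 \neq 0$. After all $d+1$ coefficients are chosen, Wanda wins if $f$ has a root in $K$, and Nora wins otherwise. Who moves first is fixed in advance. *)

theory Defs
  imports "HOL-Computational_Algebra.Polynomial"
begin

text \<open>A (normalized) discrete valuation on a field K, given on nonzero elements.
  Its valuation ring O = {x. v x >= 0} together with 0 is a DVR with fraction field K,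
  and every DVR O with fraction field K arises this way.\<close>

definition discrete_valuation :: "('a::field \<Rightarrow> int) \<Rightarrow> bool" where
  "discrete_valuation v \<longleftrightarrow>
     (\<forall>x y. x \<noteq> 0 \<and> y \<noteq> 0 \<longrightarrow> v (x * y) = v x + v y) \<and>
     (\<forall>x y. x \<noteq> 0 \<and> y \<noteq> 0 \<and> x + y \<noteq> 0 \<longrightarrow> min (v x) (v y) \<le> v (x + y)) \<and>
     (\<exists>\<pi>. \<pi> \<noteq> 0 \<and> v \<pi> = 1)"

definition val_ring :: "('a::field \<Rightarrow> int) \<Rightarrow> 'a set" where
  "val_ring v = {x. x = 0 \<or> 0 \<le> v x}"

definition in_max_pow :: "('a::field \<Rightarrow> int) \<Rightarrow> nat \<Rightarrow> 'a \<Rightarrow> bool" where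
  "in_max_pow v N x \<longleftrightarrow> x = 0 \<or> int N \<le> v x"

definition max_ideal :: "('a::field \<Rightarrow> int) \<Rightarrow> 'a set" where
  "max_ideal v = {x. in_max_pow v 1 x}"

definition residue_classes :: "('a::field \<Rightarrow> int) \<Rightarrow> 'a set set" where
  "residue_classes v = val_ring v //
     {(x, y). x \<in> val_ring v \<and> y \<in> val_ring v \<and> x - y \<in> max_ideal v}"

definition complete_val_ring :: "('a::field \<Rightarrow> int) \<Rightarrow> bool" where
  "complete_val_ring v \<longleftrightarrow>
     (\<forall>s :: nat \<Rightarrow> 'a. (\<forall>n. s n \<in> val_ring v) \<and>
        (\<forall>N. \<exists>M. \<forall>m\<ge>M. \<forall>n\<ge>M. in_max_pow v N (s m - s n)) \<longrightarrow>
        (\<exists>L\<in>val_ring v. \<forall>N. \<exists>M. \<forall>n\<ge>M. in_max_pow v N (s n - L)))"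

definition nonarch_local_field :: "('a::field \<Rightarrow> int) \<Rightarrow> bool" where
  "nonarch_local_field v \<longleftrightarrow>
     discrete_valuation v \<and> complete_val_ring v \<and> finite (residue_classes v)"

datatype player = Nora | Wanda

fun other :: "player \<Rightarrow> player" where
  "other Nora = Wanda" | "other Wanda = Nora"

text \<open>A position: a partial assignment of the coefficients a_0..a_d (None = not yet chosen).\<close>
definition legal_move :: "nat \<Rightarrow> (nat \<Rightarrow> 'a::field option) \<Rightarrow> nat \<Rightarrow> 'a \<Rightarrow> bool" where
  "legal_move d a i c \<longleftrightarrow> i \<le> d \<and> a i = None \<and> (i = d \<longrightarrow> c \<noteq> 0) \<and> (i = 0 \<longrightarrow> c \<noteq> 0)"

definition game_poly :: "nat \<Rightarrow> (nat \<Rightarrow> 'a::field option) \<Rightarrow> 'a poly" where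
  "game_poly d a = (\<Sum>i\<le>d. monom (the (a i)) i)"

definition has_root :: "'a::field poly \<Rightarrow> bool" where
  "has_root f \<longleftrightarrow> (\<exists>x. poly f x = 0)"

text \<open>wins p d n a m: player p can force a win from position a, with n moves remaining
  and player m to move.\<close>
fun wins :: "player \<Rightarrow> nat \<Rightarrow> nat \<Rightarrow> (nat \<Rightarrow> 'a::field option) \<Rightarrow> player \<Rightarrow> bool" where
  "wins p d 0 a m = (if p = Wanda then has_root (game_poly d a) else \<not> has_root (game_poly d a))"
| "wins p d (Suc n) a m =
     (if m = p then (\<exists>i c. legal_move d a i c \<and> wins p d n (a(i := Some c)) (other m))
      else (\<forall>i c. legal_move d a i c \<longrightarrow> wins p d n (a(i := Some c)) (other m)))"

definition has_winning_strategy :: "'a::field itself \<Rightarrow> nat \<Rightarrow> player \<Rightarrow> player \<Rightarrow> bool" where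
  "has_winning_strategy K d first p \<longleftrightarrow> wins p d (Suc d) (\<lambda>_. None :: 'a option) first"

definition last_mover :: "nat \<Rightarrow> player \<Rightarrow> player" where
  "last_mover d first = (if odd (Suc d) then first else other first)"

end

theory Submission
  imports Defs
begin


lemma poly_gp3: "poly (game_poly 3 a) x = the (a 0) + the (a 1) * x + the (a 2) * x^2 + the (a 3) * x^3"
  by (simp add: game_poly_def poly_sum poly_monom numeral_3_eq_3 atMost_Suc algebra_simps power2_eq_square power3_eq_cube Suc_1[symmetric])

lemma all_le3: "(\<forall>i::nat. i \<le> 3 \<longrightarrow> P i) \<longleftrightarrow> P 0 \<and> P 1 \<and> P 2 \<and> P 3"
  by (metis le_Suc_eq le_zero_eq numeral_3_eq_3 One_nat_def Suc_1)

lemma ex_le3: "(\<exists>i::nat. i \<le> 3 \<and> P i) \<longleftrightarrow> P 0 \<or> P 1 \<or> P 2 \<or> P 3"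
  by (metis le_Suc_eq le_zero_eq numeral_3_eq_3 One_nat_def Suc_1)

lemma wins_Suc_eq: "wins p d (Suc n) a m =
     (if m = p then (\<exists>i c. legal_move d a i c \<and> wins p d n (a(i := Some c)) (other m))
      else (\<forall>i c. legal_move d a i c \<longrightarrow> wins p d n (a(i := Some c)) (other m)))"
  by simp

lemma nora_last:
  assumes "legal_move 3 a j c" "\<And>x. poly (game_poly 3 (a(j:=Some c))) x \<noteq> 0"
  shows "wins Nora 3 1 a Nora"
  using assms by (auto simp: has_root_def)

lemma nora_mid:
  assumes "legal_move 3 a j c" "wins Nora 3 2 (a(j:=Some c)) Wanda"
  shows "wins Nora 3 3 a Nora"
  using assms by (auto simp: numeral_eq_Suc)

lemma nora_resp:
  assumes "\<And>i c. legal_move 3 a i c \<Longrightarrow> wins Nora 3 1 (a(i:=Some c)) Nora"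
  shows "wins Nora 3 2 a Wanda"
  using assms by (auto simp: numeral_eq_Suc)

lemma legal3: "legal_move 3 a i c \<longleftrightarrow> (i = 0 \<or> i = 1 \<or> i = 2 \<or> i = 3) \<and> a i = None \<and> (i = 3 \<longrightarrow> c \<noteq> 0) \<and> (i = 0 \<longrightarrow> c \<noteq> 0)"
  unfolding legal_move_def using all_le3[of "\<lambda>j. j \<noteq> i"] by auto

abbreviation E :: "nat \<Rightarrow> 'a::field option" where "E \<equiv> \<lambda>_. None"


context
  fixes v :: "'a::field \<Rightarrow> int"
  assumes dv: "discrete_valuation v"
begin

definition Q :: "int \<Rightarrow> 'a \<Rightarrow> bool" where "Q m x \<longleftrightarrow> x = 0 \<or> m \<le> v x"

lemma vmult: "x \<noteq> 0 \<Longrightarrow> y \<noteq> 0 \<Longrightarrow> v (x*y) = v x + v y"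
  using dv unfolding discrete_valuation_def by blast

lemma vadd: "x \<noteq> 0 \<Longrightarrow> y \<noteq> 0 \<Longrightarrow> x + y \<noteq> 0 \<Longrightarrow> min (v x) (v y) \<le> v (x + y)"
  using dv unfolding discrete_valuation_def by blast

lemma pi_ex: "\<exists>p. p \<noteq> 0 \<and> v p = 1"
  using dv unfolding discrete_valuation_def by blast

lemma v1: "v 1 = 0"
  using vmult[of 1 1] by simp

lemma vm1: "v (-1) = 0"
  using vmult[of "-1" "-1"] v1 by simp

lemma vneg: "x \<noteq> 0 \<Longrightarrow> v (-x) = v x"
  using vmult[of "-1" x] vm1 by simp

lemma vinv: "x \<noteq> 0 \<Longrightarrow> v (inverse x) = - v x"
  using vmult[of x "inverse x"] v1 by simp

lemma vpow: "x \<noteq> 0 \<Longrightarrow> v (x^n) = int n * v x"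
  by (induction n) (auto simp: v1 vmult algebra_simps)

lemma Qval: "Q (v x) x" by (simp add: Q_def)
lemma Q0[simp]: "Q m 0" by (simp add: Q_def)
lemma Qmono: "Q a x \<Longrightarrow> b \<le> a \<Longrightarrow> Q b x" by (auto simp: Q_def)
lemma Qadd: "Q m x \<Longrightarrow> Q m y \<Longrightarrow> Q m (x + y)"
  unfolding Q_def using vadd[of x y] by fastforce
lemma Qneg: "Q m x \<Longrightarrow> Q m (-x)" by (cases "x = 0") (auto simp: Q_def vneg)
lemma Qdiff: "Q m x \<Longrightarrow> Q m y \<Longrightarrow> Q m (x - y)"
  using Qadd[of m x "-y"] Qneg[of m y] by simp
lemma Qmult: "Q a x \<Longrightarrow> Q b y \<Longrightarrow> Q (a + b) (x * y)"
  by (cases "x = 0"; cases "y = 0") (auto simp: Q_def vmult)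
lemma Qmultc: "Q a x \<Longrightarrow> Q b y \<Longrightarrow> c \<le> a + b \<Longrightarrow> Q c (x * y)"
  using Qmult Qmono by blast

lemma dom: "t \<noteq> 0 \<Longrightarrow> Q (v t + 1) s \<Longrightarrow> t + s \<noteq> 0"
proof
  assume "t \<noteq> 0" "Q (v t + 1) s" "t + s = 0"
  then have "s = -t" by (simp add: eq_neg_iff_add_eq_0 add.commute)
  with \<open>t \<noteq> 0\<close> \<open>Q (v t + 1) s\<close> show False by (simp add: Q_def vneg)
qed

lemma dom4: "t \<noteq> 0 \<Longrightarrow> Q (v t + 1) s1 \<Longrightarrow> Q (v t + 1) s2 \<Longrightarrow> Q (v t + 1) s3 \<Longrightarrow> t + (s1 + s2 + s3) \<noteq> 0"
  by (intro dom Qadd)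

lemma Qterm: "x \<noteq> 0 \<Longrightarrow> m \<le> v a + int n * v x \<Longrightarrow> Q m (a * x^n)"
  by (cases "a = 0") (auto simp: Q_def vmult vpow)

lemma vterm: "a \<noteq> 0 \<Longrightarrow> x \<noteq> 0 \<Longrightarrow> v (a * x^n) = v a + int n * v x"
  by (simp add: vmult vpow)

lemma rho_ex: "\<exists>r. r \<noteq> 0 \<and> v r = -1"
  using pi_ex vinv by (metis inverse_nonzero_iff_nonzero)

lemma LB: fixes a3 :: 'a assumes a3: "a3 \<noteq> 0" shows "\<exists>a0. a0 \<noteq> 0 \<and> (\<forall>x. a0 + a1*x + a2*x^2 + a3*x^3 \<noteq> 0)"
proof -
  obtain r where r: "r \<noteq> 0" "v r = -1" using rho_ex by blast
  define N where "N = nat (\<bar>v a3\<bar> + \<bar>v a2\<bar> + \<bar>v a1\<bar> + 1)"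
  have N: "int N = \<bar>v a3\<bar> + \<bar>v a2\<bar> + \<bar>v a1\<bar> + 1" unfolding N_def by simp
  define a0 where "a0 = a3 * r^(3*N+1)"
  have a0: "a0 \<noteq> 0" "v a0 = v a3 - 3 * int N - 1" using a3 r vterm[of a3 r "3*N+1"] by (auto simp: a0_def)
  have "a0 + a1*x + a2*x^2 + a3*x^3 \<noteq> 0" for x
  proof (cases "x = 0")
    case True then show ?thesis using a0 by simp
  next
    case x: False
    show ?thesis
    proof (cases "v x \<ge> - int N")
      case True
      have "a0 + (a1*x^1 + a2*x^2 + a3*x^3) \<noteq> 0"
        by (rule dom4[OF a0(1)]; rule Qterm[OF x]; use True N a0 in \<open>auto; arith\<close>)
      then show ?thesis by (simp add: algebra_simps)
    next
      case False
      have t: "a3*x^3 \<noteq> 0" using a3 x by simp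
      have "a3*x^3 + (a1*x^1 + a2*x^2 + a0*x^0) \<noteq> 0"
        by (rule dom4[OF t]; rule Qterm[OF x]; use False N a0 a3 x in \<open>auto simp: vterm; arith\<close>)
      then show ?thesis by (simp add: algebra_simps)
    qed
  qed
  then show ?thesis using a0 by blast
qed


lemma LB': fixes a0 :: 'a assumes a0: "a0 \<noteq> 0" shows "\<exists>a3. a3 \<noteq> 0 \<and> (\<forall>x. a0 + a1*x + a2*x^2 + a3*x^3 \<noteq> 0)"
proof -
  obtain b where b: "b \<noteq> 0" "\<And>y. b + a2*y + a1*y^2 + a0*y^3 \<noteq> 0" using LB[OF a0, of a2 a1] by blast
  have "a0 + a1*x + a2*x^2 + b*x^3 \<noteq> 0" for x
  proof
    assume h: "a0 + a1*x + a2*x^2 + b*x^3 = 0"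
    then have x: "x \<noteq> 0" using a0 by auto
    have "b + a2*inverse x + a1*(inverse x)^2 + a0*(inverse x)^3 = (a0 + a1*x + a2*x^2 + b*x^3) * (inverse x)^3"
      using x by (simp add: field_simps power2_eq_square power3_eq_cube)
    with h b(2)[of "inverse x"] show False by simp
  qed
  with b show ?thesis by blast
qed

lemma W0: fixes a3 :: 'a assumes a3: "a3 \<noteq> 0" shows "\<exists>c x. c \<noteq> 0 \<and> c + a1*x + a2*x^2 + a3*x^3 = 0"
proof -
  obtain r where r: "r \<noteq> 0" "v r = -1" using rho_ex by blast
  define N where "N = nat (\<bar>v a3\<bar> + \<bar>v a2\<bar> + \<bar>v a1\<bar> + 1)"
  have N: "int N = \<bar>v a3\<bar> + \<bar>v a2\<bar> + \<bar>v a1\<bar> + 1" unfolding N_def by simp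
  define x where "x = r^N"
  have x: "x \<noteq> 0" "v x = - int N" using r by (auto simp: x_def vpow)
  have t: "a3*x^3 \<noteq> 0" using a3 x by simp
  have "a3*x^3 + (a1*x^1 + a2*x^2 + 0) \<noteq> 0"
    by (rule dom4[OF t]; (rule Qterm[OF x(1)])?; use N a3 x in \<open>auto simp: vterm; arith\<close>)
  then have "a1*x + a2*x^2 + a3*x^3 \<noteq> 0" by (simp add: algebra_simps)
  moreover have "-(a1*x + a2*x^2 + a3*x^3) + a1*x + a2*x^2 + a3*x^3 = 0" by simp
  ultimately show ?thesis by (metis neg_equal_0_iff_equal)
qed

lemma W3: fixes a0 :: 'a assumes a0: "a0 \<noteq> 0" shows "\<exists>c x. c \<noteq> 0 \<and> a0 + a1*x + a2*x^2 + c*x^3 = 0"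
proof -
  obtain r where r: "r \<noteq> 0" "v r = 1" using pi_ex by blast
  define N where "N = nat (\<bar>v a0\<bar> + \<bar>v a2\<bar> + \<bar>v a1\<bar> + 1)"
  have N: "int N = \<bar>v a0\<bar> + \<bar>v a2\<bar> + \<bar>v a1\<bar> + 1" unfolding N_def by simp
  define x where "x = r^N"
  have x: "x \<noteq> 0" "v x = int N" using r by (auto simp: x_def vpow)
  have "a0 + (a1*x^1 + a2*x^2 + 0) \<noteq> 0"
    by (rule dom4[OF a0]; (rule Qterm[OF x(1)])?; use N a0 x in \<open>auto simp: vterm; arith\<close>)
  then have g: "a0 + a1*x + a2*x^2 \<noteq> 0" by (simp add: algebra_simps)
  have "-(a0 + a1*x + a2*x^2) / x^3 \<noteq> 0" using g x by (simp only: divide_eq_0_iff neg_equal_0_iff_equal power_eq_0_iff) simp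
  moreover have "a0 + a1*x + a2*x^2 + (-(a0 + a1*x + a2*x^2) / x^3)*x^3 = 0" using x by simp
  ultimately show ?thesis by blast
qed


lemma Qterm2: "Q b a \<Longrightarrow> x \<noteq> 0 \<Longrightarrow> m \<le> b + int n * v x \<Longrightarrow> Q m (a * x^n)"
  by (rule Qmultc[of b a "int n * v x"]) (auto simp: Q_def vpow)

lemma vdiv: "a \<noteq> 0 \<Longrightarrow> b \<noteq> 0 \<Longrightarrow> v (a / b) = v a - v b"
  by (simp add: divide_inverse vmult vinv)

definition rel :: "('a \<times> 'a) set" where
  "rel = {(x, y). x \<in> val_ring v \<and> y \<in> val_ring v \<and> x - y \<in> max_ideal v}"

lemma O_Q: "x \<in> val_ring v \<longleftrightarrow> Q 0 x" by (auto simp: val_ring_def Q_def)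
lemma p_Q: "x \<in> max_ideal v \<longleftrightarrow> Q 1 x" by (auto simp: max_ideal_def in_max_pow_def Q_def)

lemma rel_Q: "(x, y) \<in> rel \<longleftrightarrow> Q 0 x \<and> Q 0 y \<and> Q 1 (x - y)"
  by (simp add: rel_def O_Q p_Q)

lemma equiv_rel: "equiv (val_ring v) rel"
proof (rule equivI)
  show "rel \<subseteq> val_ring v \<times> val_ring v" unfolding rel_def by auto
  show "refl_on (val_ring v) rel" unfolding refl_on_def by (auto simp: rel_Q O_Q)
  show "sym rel" unfolding sym_def rel_Q
    by (metis Qneg minus_diff_eq)
  show "trans rel" unfolding trans_def rel_Q
    by (metis Qadd diff_add_cancel add_diff_eq)
qed

lemma LA0:
  fixes w :: 'a
  assumes w: "w \<noteq> 0" "v w = 0" and fin: "finite (residue_classes v)"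
  shows "\<exists>e. \<forall>y. w*y^3 + e*y^2 + 1 \<noteq> 0"
proof -
  define Ov where "Ov = val_ring v"
  define R where "R = residue_classes v"
  have R: "R = Ov // rel" unfolding R_def Ov_def residue_classes_def rel_def by simp
  have eq: "equiv Ov rel" unfolding Ov_def by (rule equiv_rel)
  define U where "U = {y. y \<noteq> 0 \<and> v y = 0}"
  define \<phi> where "\<phi> y = -(w*y + inverse (y^2))" for y
  define cls where "cls y = rel``{y}" for y
  have UO: "y \<in> Ov" if "y \<in> U" for y using that by (auto simp: U_def Ov_def O_Q Q_def)
  have vinv2: "v (inverse (y^2)) = 0" if "y \<in> U" for y
    using that by (simp add: U_def vinv vpow)
  have phiO: "Q 0 (\<phi> y)" if "y \<in> U" for y
  proof -
    have "Q 0 (w*y)" using that w by (auto simp: U_def Q_def vmult)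
    moreover have "Q 0 (inverse (y^2))" using vinv2[OF that] by (simp add: Q_def)
    ultimately show ?thesis unfolding \<phi>_def by (rule Qneg[OF Qadd])
  qed
  have phicong: "(\<phi> y, \<phi> y') \<in> rel" if "y \<in> U" "y' \<in> U" "(y, y') \<in> rel" for y y'
  proof -
    have yy: "y \<noteq> 0" "y' \<noteq> 0" "v y = 0" "v y' = 0" using that by (auto simp: U_def)
    have d: "Q 1 (y - y')" using that(3) by (simp add: rel_Q)
    have s: "Q 0 (y + y')" using UO[OF that(1)] UO[OF that(2)] by (intro Qadd) (auto simp: Ov_def O_Q)
    have "\<phi> y - \<phi> y' = w * (y' - y) + (y - y') * (y + y') * inverse (y^2 * y'^2)"
      using yy by (simp add: \<phi>_def field_simps power2_eq_square)
    moreover have "Q 1 (w * (y' - y))"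
      using Qmultc[OF Qval[of w] Qneg[OF d]] w by (simp add: minus_diff_eq)
    moreover have "Q 1 ((y - y') * (y + y') * inverse (y^2 * y'^2))"
    proof -
      have "v (inverse (y^2 * y'^2)) = 0" using yy by (simp add: vinv vmult vpow)
      then have "Q 0 (inverse (y^2 * y'^2))" by (simp add: Q_def)
      then show ?thesis by (intro Qmultc[OF Qmultc[OF d s]]) auto
    qed
    ultimately have "Q 1 (\<phi> y - \<phi> y')" by (simp add: Qadd)
    then show ?thesis using phiO that by (simp add: rel_Q)
  qed
  define S where "S = (\<lambda>y. cls (\<phi> y)) ` U"
  have clsU: "cls ` U \<subseteq> R" unfolding R cls_def using UO by (auto intro: quotientI)
  have cls0: "cls 0 \<in> R" unfolding R cls_def by (rule quotientI) (simp add: Ov_def val_ring_def)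
  have cls0n: "cls 0 \<notin> cls ` U"
  proof
    assume "cls 0 \<in> cls ` U"
    then obtain y where y: "y \<in> U" "cls 0 = cls y" by auto
    then have "(y, 0) \<in> rel" unfolding cls_def
      using eq_equiv_class_iff[OF eq, of y 0] UO[OF y(1)] by (auto simp: Ov_def val_ring_def)
    then show False using y(1) by (auto simp: rel_Q U_def Q_def)
  qed
  have c1: "card (cls ` U) < card R"
    using clsU cls0 cls0n fin by (intro psubset_card_mono) (auto simp: R_def)
  define h where "h C = cls (\<phi> (SOME y. y \<in> U \<and> cls y = C))" for C
  have "S = h ` (cls ` U)"
  proof -
    have "h (cls y) = cls (\<phi> y)" if y: "y \<in> U" for y
    proof -
      have "\<exists>y'. y' \<in> U \<and> cls y' = cls y" using y by blast
      then have sy: "(SOME y'. y' \<in> U \<and> cls y' = cls y) \<in> U \<and> cls (SOME y'. y' \<in> U \<and> cls y' = cls y) = cls y"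
        by (rule someI_ex)
      define y' where "y' = (SOME y'. y' \<in> U \<and> cls y' = cls y)"
      have y': "y' \<in> U" "cls y' = cls y" using sy unfolding y'_def by auto
      then have "(y', y) \<in> rel" unfolding cls_def using eq_equiv_class_iff[OF eq] UO y by blast
      then have "(\<phi> y', \<phi> y) \<in> rel" using phicong y' y by blast
      then have "cls (\<phi> y') = cls (\<phi> y)" unfolding cls_def using equiv_class_eq[OF eq] by blast
      then show ?thesis unfolding h_def y'_def[symmetric] by simp
    qed
    then show ?thesis unfolding S_def image_comp by (auto simp: comp_def)
  qed
  then have "card S \<le> card (cls ` U)" by (simp add: card_image_le finite_subset[OF clsU] fin R_def)
  with c1 have "card S < card R" by simp
  moreover have "finite S" using \<open>S = h ` (cls ` U)\<close> finite_subset[OF clsU] fin R_def by simp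
  ultimately have "\<not> R \<subseteq> S" using card_mono[of S R] by linarith
  then obtain C where C: "C \<in> R" "C \<notin> S" by blast
  then obtain e where e: "C = cls e" "e \<in> Ov" unfolding R cls_def by (auto elim: quotientE)
  have eQ: "Q 0 e" using e(2) by (simp add: Ov_def O_Q)
  have "w*y^3 + e*y^2 + 1 \<noteq> 0" for y
  proof
    assume root: "w*y^3 + e*y^2 + 1 = 0"
    then have y: "y \<noteq> 0" by auto
    consider "v y < 0" | "v y > 0" | "v y = 0" by linarith
    then show False
    proof cases
      case 1
      have t: "w*y^3 \<noteq> 0" using w y by simp
      have "w*y^3 + (e*y^2 + 1*y^0 + 0) \<noteq> 0"
        by (rule dom4[OF t]; (rule Qterm2[OF eQ y] | rule Qterm2[OF Qval y])?; use 1 w y in \<open>auto simp: vterm v1\<close>)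
      with root show False by (simp add: add.assoc)
    next
      case 2
      have t: "(1::'a) \<noteq> 0" by simp
      have "1 + (e*y^2 + w*y^3 + 0) \<noteq> 0"
        by (rule dom4[OF t]; (rule Qterm2[OF eQ y] | rule Qterm2[OF Qval y])?; use 2 w y in \<open>auto simp: vterm v1\<close>)
      with root show False by (simp add: algebra_simps)
    next
      case 3
      then have yU: "y \<in> U" using y by (simp add: U_def)
      have "e = \<phi> y" using root y unfolding \<phi>_def
        by (simp add: field_simps power2_eq_square power3_eq_cube) (metis add.commute add_eq_0_iff2 mult.assoc mult.left_commute)
      then have "C \<in> S" using e yU unfolding S_def by auto
      with C show False by simp
    qed
  qed
  then show ?thesis by blast
qed


lemma t_ex: "\<exists>t. t \<noteq> 0 \<and> v t = m"
proof (cases "m \<ge> 0")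
  case True
  obtain p where p: "p \<noteq> 0" "v p = 1" using pi_ex by blast
  show ?thesis using p True by (intro exI[of _ "p ^ nat m"]) (simp add: vpow)
next
  case False
  obtain r where r: "r \<noteq> 0" "v r = -1" using rho_ex by blast
  show ?thesis using r False by (intro exI[of _ "r ^ nat (-m)"]) (simp add: vpow)
qed

lemma LA:
  fixes a0 :: 'a
  assumes a0: "a0 \<noteq> 0" and a3: "a3 \<noteq> 0" and fin: "finite (residue_classes v)"
  shows "\<exists>c. \<forall>x. a0 + 0*x + c*x^2 + a3*x^3 \<noteq> 0"
proof (cases "3 dvd (v a3 - v a0)")
  case False
  have "a0 + 0*x + 0*x^2 + a3*x^3 \<noteq> 0" for x
  proof
    assume h: "a0 + 0*x + 0*x^2 + a3*x^3 = 0"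
    then have x: "x \<noteq> 0" using a0 by auto
    from h have "a3*x^3 = -a0" by (simp add: eq_neg_iff_add_eq_0 add.commute)
    then have "v a3 + 3 * v x = v a0" using vterm[OF a3 x, of 3] vneg[OF a0] by simp
    then have "v a3 - v a0 = 3 * (- v x)" by simp
    with False show False by (metis dvd_triv_left)
  qed
  then show ?thesis by blast
next
  case True
  then obtain m where m: "v a3 - v a0 = 3 * m" by (auto elim: dvdE)
  obtain t where t: "t \<noteq> 0" "v t = m" using t_ex by blast
  define w where "w = a3 / (a0 * t^3)"
  have w: "w \<noteq> 0" "v w = 0" using a0 a3 t m by (auto simp: w_def vdiv vmult vpow)
  obtain e where e: "\<And>y. w*y^3 + e*y^2 + 1 \<noteq> 0" using LA0[OF w fin] by blast
  have "a0 + 0*x + (e*a0*t^2)*x^2 + a3*x^3 \<noteq> 0" for x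
  proof -
    have "a0 + 0*x + (e*a0*t^2)*x^2 + a3*x^3 = a0 * (w*(t*x)^3 + e*(t*x)^2 + 1)"
      using a0 t by (simp add: w_def field_simps power2_eq_square power3_eq_cube)
    then show ?thesis using a0 e[of "t*x"] by simp
  qed
  then show ?thesis by blast
qed

lemma LA':
  fixes a0 :: 'a
  assumes a0: "a0 \<noteq> 0" and a3: "a3 \<noteq> 0" and fin: "finite (residue_classes v)"
  shows "\<exists>c. \<forall>x. a0 + c*x + 0*x^2 + a3*x^3 \<noteq> 0"
proof -
  obtain c where c: "\<And>y. a3 + 0*y + c*y^2 + a0*y^3 \<noteq> 0" using LA[OF a3 a0 fin] by blast
  have "a0 + c*x + 0*x^2 + a3*x^3 \<noteq> 0" for x
  proof
    assume h: "a0 + c*x + 0*x^2 + a3*x^3 = 0"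
    then have x: "x \<noteq> 0" using a0 by auto
    have "a3 + 0*inverse x + c*(inverse x)^2 + a0*(inverse x)^3 = (a0 + c*x + 0*x^2 + a3*x^3) * (inverse x)^3"
      using x by (simp add: field_simps power2_eq_square power3_eq_cube)
    with h c[of "inverse x"] show False by simp
  qed
  then show ?thesis by blast
qed


context
  assumes fin: "finite (residue_classes v)"
begin



lemma case0: assumes "(\<alpha>::'a) \<noteq> 0" shows "wins Nora 3 3 (E(0:=Some \<alpha>)) Nora"
proof (rule nora_mid[where j=1 and c=0])
  show "legal_move 3 (E(0:=Some \<alpha>)) 1 0" by (simp add: legal_move_def)
  show "wins Nora 3 2 (E(0:=Some \<alpha>, 1:=Some 0)) Wanda"
  proof (rule nora_resp)
    fix i c assume l: "legal_move 3 (E(0:=Some \<alpha>, 1:=Some 0)) i c"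
    then have "i = 2 \<or> i = 3" by (auto simp: legal3)
    then show "wins Nora 3 1 (E(0:=Some \<alpha>, 1:=Some 0, i:=Some c)) Nora"
    proof
      assume [simp]: "i = 2"
      obtain b where "b \<noteq> 0" "\<forall>x. \<alpha> + 0*x + c*x^2 + b*x^3 \<noteq> 0" using LB' assms by blast
      then show ?thesis by (intro nora_last[where j=3 and c=b]) (auto simp: legal3 poly_gp3)
    next
      assume [simp]: "i = 3"
      with l have "c \<noteq> 0" by (simp add: legal3)
      obtain b where "\<forall>x. \<alpha> + 0*x + b*x^2 + c*x^3 \<noteq> 0" using LA[OF _ _ fin] assms \<open>c \<noteq> 0\<close> by blast
      then show ?thesis by (intro nora_last[where j=2 and c=b]) (auto simp: legal3 poly_gp3)
    qed
  qed
qed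


lemma case1: "wins Nora 3 3 (E(1:=Some (\<delta>::'a))) Nora"
proof (rule nora_mid[where j=2 and c=0])
  show "legal_move 3 (E(1:=Some \<delta>)) 2 0" by (simp add: legal_move_def)
  show "wins Nora 3 2 (E(1:=Some \<delta>, 2:=Some 0)) Wanda"
  proof (rule nora_resp)
    fix i c assume l: "legal_move 3 (E(1:=Some \<delta>, 2:=Some 0)) i c"
    then have "i = 0 \<or> i = 3" and "c \<noteq> 0" by (auto simp: legal3)
    then show "wins Nora 3 1 (E(1:=Some \<delta>, 2:=Some 0, i:=Some c)) Nora"
    proof (elim disjE)
      assume [simp]: "i = 0"
      obtain b where "b \<noteq> 0" "\<forall>x. c + \<delta>*x + 0*x^2 + b*x^3 \<noteq> 0" using LB' \<open>c \<noteq> 0\<close> by blast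
      then show ?thesis by (intro nora_last[where j=3 and c=b]) (auto simp: legal3 poly_gp3)
    next
      assume [simp]: "i = 3"
      obtain b where "b \<noteq> 0" "\<forall>x. b + \<delta>*x + 0*x^2 + c*x^3 \<noteq> 0" using LB \<open>c \<noteq> 0\<close> by blast
      then show ?thesis by (intro nora_last[where j=0 and c=b]) (auto simp: legal3 poly_gp3)
    qed
  qed
qed

lemma case2: "wins Nora 3 3 (E(2:=Some (\<gamma>::'a))) Nora"
proof (rule nora_mid[where j=1 and c=0])
  show "legal_move 3 (E(2:=Some \<gamma>)) 1 0" by (simp add: legal_move_def)
  show "wins Nora 3 2 (E(2:=Some \<gamma>, 1:=Some 0)) Wanda"
  proof (rule nora_resp)
    fix i c assume l: "legal_move 3 (E(2:=Some \<gamma>, 1:=Some 0)) i c"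
    then have "i = 0 \<or> i = 3" and "c \<noteq> 0" by (auto simp: legal3)
    then show "wins Nora 3 1 (E(2:=Some \<gamma>, 1:=Some 0, i:=Some c)) Nora"
    proof (elim disjE)
      assume [simp]: "i = 0"
      obtain b where "b \<noteq> 0" "\<forall>x. c + 0*x + \<gamma>*x^2 + b*x^3 \<noteq> 0" using LB' \<open>c \<noteq> 0\<close> by blast
      then show ?thesis by (intro nora_last[where j=3 and c=b]) (auto simp: legal3 poly_gp3)
    next
      assume [simp]: "i = 3"
      obtain b where "b \<noteq> 0" "\<forall>x. b + 0*x + \<gamma>*x^2 + c*x^3 \<noteq> 0" using LB \<open>c \<noteq> 0\<close> by blast
      then show ?thesis by (intro nora_last[where j=0 and c=b]) (auto simp: legal3 poly_gp3)
    qed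
  qed
qed

lemma case3: assumes "(\<beta>::'a) \<noteq> 0" shows "wins Nora 3 3 (E(3:=Some \<beta>)) Nora"
proof (rule nora_mid[where j=2 and c=0])
  show "legal_move 3 (E(3:=Some \<beta>)) 2 0" by (simp add: legal_move_def)
  show "wins Nora 3 2 (E(3:=Some \<beta>, 2:=Some 0)) Wanda"
  proof (rule nora_resp)
    fix i c assume l: "legal_move 3 (E(3:=Some \<beta>, 2:=Some 0)) i c"
    then have "i = 0 \<or> i = 1" by (auto simp: legal3)
    then show "wins Nora 3 1 (E(3:=Some \<beta>, 2:=Some 0, i:=Some c)) Nora"
    proof (elim disjE)
      assume [simp]: "i = 0"
      with l have "c \<noteq> 0" by (simp add: legal3)
      obtain b where "\<forall>x. c + b*x + 0*x^2 + \<beta>*x^3 \<noteq> 0" using LA'[OF _ _ fin] assms \<open>c \<noteq> 0\<close> by blast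
      then show ?thesis by (intro nora_last[where j=1 and c=b]) (auto simp: legal3 poly_gp3)
    next
      assume [simp]: "i = 1"
      obtain b where "b \<noteq> 0" "\<forall>x. b + c*x + 0*x^2 + \<beta>*x^3 \<noteq> 0" using LB assms by blast
      then show ?thesis by (intro nora_last[where j=0 and c=b]) (auto simp: legal3 poly_gp3)
    qed
  qed
qed

lemma nora_wins: "wins Nora 3 4 (E :: nat \<Rightarrow> 'a option) Wanda"
proof -
  have "wins Nora 3 3 (E(i:=Some c)) Nora" if l: "legal_move 3 E i c" for i and c :: 'a
  proof -
    from l have "i = 0 \<or> i = 1 \<or> i = 2 \<or> i = 3" "i = 0 \<longrightarrow> c \<noteq> 0" "i = 3 \<longrightarrow> c \<noteq> 0" by (auto simp: legal3)
    then show ?thesis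
    proof (elim conjE disjE)
      assume "i = 0" "i = 0 \<longrightarrow> c \<noteq> 0" then show ?thesis using case0[of c] by simp
    next
      assume "i = 1" then show ?thesis using case1[of c] by simp
    next
      assume "i = 2" then show ?thesis using case2[of c] by simp
    next
      assume "i = 3" "i = 3 \<longrightarrow> c \<noteq> 0" then show ?thesis using case3[of c] by simp
    qed
  qed
  then show ?thesis by (simp add: numeral_eq_Suc)
qed

lemma wanda_last:
  assumes "j \<le> 3" "a j = None" "\<And>i. i \<le> 3 \<Longrightarrow> i \<noteq> j \<Longrightarrow> a i \<noteq> None"
    "a 0 \<noteq> Some 0" "a 3 \<noteq> Some 0"
  shows "wins Wanda 3 1 (a::nat \<Rightarrow> 'a option) Wanda"
proof -
  have j: "j = 0 \<or> j = 1 \<or> j = 2 \<or> j = 3" using assms(1) all_le3[of "\<lambda>i. i \<noteq> j"] by auto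
  have ex: "\<exists>c. legal_move 3 a j c \<and> (\<exists>x. poly (game_poly 3 (a(j:=Some c))) x = 0)"
    using j
  proof (elim disjE)
    assume [simp]: "j = 0"
    have "a 3 \<noteq> None" using assms(3)[of 3] by simp
    then have "the (a 3) \<noteq> 0" using assms(5) by auto
    then obtain c x where "c \<noteq> 0" "c + the (a 1)*x + the (a 2)*x^2 + the (a 3)*x^3 = 0" using W0 by blast
    then show ?thesis using assms(2) by (intro exI[of _ c]) (auto simp: legal3 poly_gp3)
  next
    assume [simp]: "j = 3"
    have "a 0 \<noteq> None" using assms(3)[of 0] by simp
    then have "the (a 0) \<noteq> 0" using assms(4) by auto
    then obtain c x where "c \<noteq> 0" "the (a 0) + the (a 1)*x + the (a 2)*x^2 + c*x^3 = 0" using W3 by blast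
    then show ?thesis using assms(2) by (intro exI[of _ c]) (auto simp: legal3 poly_gp3)
  next
    assume [simp]: "j = 1"
    show ?thesis using assms(2)
      by (intro exI[of _ "- (the (a 0) + the (a 2) + the (a 3))"]) (auto simp: legal3 poly_gp3 intro!: exI[of _ 1])
  next
    assume [simp]: "j = 2"
    show ?thesis using assms(2)
      by (intro exI[of _ "- (the (a 0) + the (a 1) + the (a 3))"]) (auto simp: legal3 poly_gp3 intro!: exI[of _ 1])
  qed
  then show ?thesis by (auto simp: has_root_def)
qed

lemma wanda_wins: "wins Wanda 3 4 (E :: nat \<Rightarrow> 'a option) Nora"
proof -
  have "wins Wanda 3 3 (E(i:=Some c)) Wanda" if l: "legal_move 3 E i c" for i and c :: 'a
  proof -
    define i' where "i' = (if i = 0 then 1 else (0::nat))"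
    from l have ii: "i = 0 \<or> i = 1 \<or> i = 2 \<or> i = 3" "i = 0 \<longrightarrow> c \<noteq> 0" "i = 3 \<longrightarrow> c \<noteq> 0" by (auto simp: legal3)
    have l2: "legal_move 3 (E(i:=Some c)) i' 1" using ii by (auto simp: legal3 i'_def)
    have "wins Wanda 3 1 (E(i:=Some c, i':=Some 1, i'':=Some c'')) Wanda"
      if l3: "legal_move 3 (E(i:=Some c, i':=Some 1)) i'' c''" for i'' and c'' :: 'a
    proof -
      from l3 have iii: "i'' = 0 \<or> i'' = 1 \<or> i'' = 2 \<or> i'' = 3" "i'' \<noteq> i" "i'' \<noteq> i'"
        "i'' = 0 \<longrightarrow> c'' \<noteq> 0" "i'' = 3 \<longrightarrow> c'' \<noteq> 0"
        by (auto simp: legal3 split: if_splits)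
      have "\<exists>j\<le>3. (E(i:=Some c, i':=Some 1, i'':=Some c'')) j = None \<and>
         (\<forall>k. k \<le> 3 \<longrightarrow> k \<noteq> j \<longrightarrow> (E(i:=Some c, i':=Some 1, i'':=Some c'')) k \<noteq> None)"
        unfolding ex_le3 all_le3 using ii iii by (auto simp: i'_def)
      then obtain j where "j \<le> 3" "(E(i:=Some c, i':=Some 1, i'':=Some c'')) j = None"
         "\<And>k. k \<le> 3 \<Longrightarrow> k \<noteq> j \<Longrightarrow> (E(i:=Some c, i':=Some 1, i'':=Some c'')) k \<noteq> None" by blast
      then show ?thesis
        by (rule wanda_last) (use ii iii in \<open>auto simp: i'_def\<close>)
    qed
    then have "wins Wanda 3 2 (E(i:=Some c, i':=Some 1)) Nora" by (simp add: numeral_eq_Suc)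
    then show ?thesis using l2 by (auto simp: numeral_eq_Suc)
  qed
  then show ?thesis by (simp add: numeral_eq_Suc)
qed

end

end

theorem proposition2:
  fixes v :: "'a::field \<Rightarrow> int" and first :: player
  assumes "nonarch_local_field v"
  shows "has_winning_strategy TYPE('a) 3 first (last_mover 3 first)"
proof -
  have dv: "discrete_valuation v" and fin: "finite (residue_classes v)"
    using assms by (auto simp: nonarch_local_field_def)
  show ?thesis
  proof (cases first)
    case Nora
    then show ?thesis using wanda_wins[OF dv fin]
      by (simp add: has_winning_strategy_def last_mover_def del: wins.simps)
  next
    case Wanda
    then show ?thesis using nora_wins[OF dv fin]
      by (simp add: has_winning_strategy_def last_mover_def del: wins.simps)
  qed
qed

end
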